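(* Let $(\mathfrak{g}_\sigma,\mathfrak{q})$ be a $CR$-algebra and let $Z\in\sigma(\mathfrak{q})\setminus\mathfrak{q}$ have finite Levi-order $k$. Let $(Z_1,\dots,Z_k)$ be a Levi-sequence for $Z$ of minimal length $k$. Then: (i) $Z_i\in\mathfrak{q}\setminus\sigma(\mathfrak{q})$ for $1\le i\le k$; (ii) if $k>1$, then $[Z,Z_i]\in(\mathfrak{q}+\sigma(\mathfrak{q}))\setminus\mathfrak{q}$ for every $i$; (iii) for every permutation $(i_1,\dots,i_k)$ of $(1,\dots,k)$, the sequence $(Z_{i_1},\dots,Z_{i_k})$ is again a Levi-sequence for $Z$.
   Context: $\mathfrak{g}$ is a finite-dimensional complex Lie algebra, $\sigma$ an anti-$\mathbb{C}$-linear involution of $\mathfrak{g}$, $\mathfrak{g}_\sigma$ its fixed point set (a real form of $\mathfrak{g}$). A $CR$-algebra is a pair $(\mathfrak{g}_\sigma,\mathfrak{q})$ with $\mathfrak{q}$ a complex Lie subalgebra of $\mathfrak{g}$. Higher order commutators are defined recursively by $[X_1,\dots,X_{h-1},X_h]=[[X_1,\dots,X_{h-1}],X_h]$. For $Z\in\sigma(\mathfrak{q})\setminus\mathfrak{q}$, a Levi-sequence for $Z$ is a finite sequence $(Z_1,\dots,Z_k)$ of elements of $\mathfrak{q}$ with $[Z,Z_1,\dots,Z_k]\notin\mathfrak{q}+\sigma(\mathfrak{q})$; $Z$ has finite Levi-order if it admits a Levi-sequence, and its Levi-order is the minimal length of its Levi-sequences. *)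

theory Defs
  imports "HOL-Analysis.Analysis" "HOL-Combinatorics.Permutations"
begin

definition complex_lie_algebra ::
  "(complex \<Rightarrow> 'g::ab_group_add \<Rightarrow> 'g) \<Rightarrow> ('g \<Rightarrow> 'g \<Rightarrow> 'g) \<Rightarrow> bool" where
  "complex_lie_algebra sc br \<longleftrightarrow>
     (\<exists>B. finite_dimensional_vector_space sc B) \<and>
     (\<forall>x y z. br (x + y) z = br x z + br y z) \<and>
     (\<forall>x y z. br x (y + z) = br x y + br x z) \<and>
     (\<forall>c x y. br (sc c x) y = sc c (br x y)) \<and>
     (\<forall>c x y. br x (sc c y) = sc c (br x y)) \<and>
     (\<forall>x. br x x = 0) \<and>
     (\<forall>x y z. br x (br y z) + br y (br z x) + br z (br x y) = 0)"

definition anti_linear_involution ::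
  "(complex \<Rightarrow> 'g::ab_group_add \<Rightarrow> 'g) \<Rightarrow> ('g \<Rightarrow> 'g \<Rightarrow> 'g) \<Rightarrow> ('g \<Rightarrow> 'g) \<Rightarrow> bool" where
  "anti_linear_involution sc br \<sigma> \<longleftrightarrow>
     (\<forall>x y. \<sigma> (x + y) = \<sigma> x + \<sigma> y) \<and>
     (\<forall>c x. \<sigma> (sc c x) = sc (cnj c) (\<sigma> x)) \<and>
     (\<forall>x. \<sigma> (\<sigma> x) = x) \<and>
     (\<forall>x y. \<sigma> (br x y) = br (\<sigma> x) (\<sigma> y))"

definition lie_subalgebra ::
  "(complex \<Rightarrow> 'g::ab_group_add \<Rightarrow> 'g) \<Rightarrow> ('g \<Rightarrow> 'g \<Rightarrow> 'g) \<Rightarrow> 'g set \<Rightarrow> bool" where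
  "lie_subalgebra sc br q \<longleftrightarrow>
     module.subspace sc q \<and> (\<forall>x\<in>q. \<forall>y\<in>q. br x y \<in> q)"

definition iter_comm :: "('g \<Rightarrow> 'g \<Rightarrow> 'g) \<Rightarrow> 'g \<Rightarrow> 'g list \<Rightarrow> 'g" where
  "iter_comm br Z zs = foldl br Z zs"

definition q_plus_sq :: "('g::ab_group_add \<Rightarrow> 'g) \<Rightarrow> 'g set \<Rightarrow> 'g set" where
  "q_plus_sq \<sigma> q = {a + b | a b. a \<in> q \<and> b \<in> \<sigma> ` q}"

definition levi_sequence ::
  "('g::ab_group_add \<Rightarrow> 'g \<Rightarrow> 'g) \<Rightarrow> ('g \<Rightarrow> 'g) \<Rightarrow> 'g set \<Rightarrow> 'g \<Rightarrow> 'g list \<Rightarrow> bool" where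
  "levi_sequence br \<sigma> q Z zs \<longleftrightarrow>
     set zs \<subseteq> q \<and> iter_comm br Z zs \<notin> q_plus_sq \<sigma> q"

definition finite_levi_order ::
  "('g::ab_group_add \<Rightarrow> 'g \<Rightarrow> 'g) \<Rightarrow> ('g \<Rightarrow> 'g) \<Rightarrow> 'g set \<Rightarrow> 'g \<Rightarrow> bool" where
  "finite_levi_order br \<sigma> q Z \<longleftrightarrow> (\<exists>zs. levi_sequence br \<sigma> q Z zs)"

definition levi_order ::
  "('g::ab_group_add \<Rightarrow> 'g \<Rightarrow> 'g) \<Rightarrow> ('g \<Rightarrow> 'g) \<Rightarrow> 'g set \<Rightarrow> 'g \<Rightarrow> nat" where
  "levi_order br \<sigma> q Z = (LEAST k. \<exists>zs. levi_sequence br \<sigma> q Z zs \<and> length zs = k)"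

end

theory Submission
  imports Defs
begin

locale LS =
  fixes sc :: "complex \<Rightarrow> 'g::ab_group_add \<Rightarrow> 'g"
    and br :: "'g \<Rightarrow> 'g \<Rightarrow> 'g"
    and \<sigma> :: "'g \<Rightarrow> 'g"
    and q :: "'g set"
    and Z :: 'g
    and k :: nat
  assumes lie: "complex_lie_algebra sc br"
    and inv: "anti_linear_involution sc br \<sigma>"
    and sub: "lie_subalgebra sc br q"
    and ord: "levi_order br \<sigma> q Z = k"
begin

abbreviation "V \<equiv> q_plus_sq \<sigma> q"

lemma brl: "br (x + y) z = br x z + br y z" using lie unfolding complex_lie_algebra_def by blast
lemma brr: "br x (y + z) = br x y + br x z" using lie unfolding complex_lie_algebra_def by blast
lemma brxx: "br x x = 0" using lie unfolding complex_lie_algebra_def by blast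
lemma jac: "br x (br y z) + br y (br z x) + br z (br x y) = 0" using lie unfolding complex_lie_algebra_def by blast

lemma brl_diff: "br (x - y) z = br x z - br y z"
  using brl[of "x - y" y z] by (simp add: eq_diff_eq)
lemma antisym: "br x y = - br y x"
proof -
  have "0 = br (x + y) (x + y)" by (simp only: brxx)
  also have "\<dots> = (br x x + br x y) + (br y x + br y y)" by (simp only: brl brr ac_simps)
  also have "\<dots> = br x y + br y x" by (simp add: brxx)
  finally have "br x y + br y x = 0" by simp
  thus ?thesis by (simp add: eq_neg_iff_add_eq_0)
qed

lemma jac2: "br (br A a) b - br (br A b) a = br A (br a b)"
proof -
  have "br A (br a b) + br a (br b A) + br b (br A a) = 0" by (rule jac)
  moreover have "br a (br b A) = br (br A b) a"
  proof -
    have n0: "br 0 a = 0" using brl_diff[of 0 0 a] by simp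
    have e1: "br a (br b A) = - br (br b A) a" by (rule antisym)
    have e2: "br b A = - br A b" by (rule antisym)
    have e3: "br (- br A b) a = - br (br A b) a" using brl_diff[of 0 "br A b" a] n0 by simp
    show ?thesis using e1 e3 by (simp add: e2)
  qed
  moreover have "br b (br A a) = - br (br A a) b" by (rule antisym)
  ultimately show ?thesis by (simp add: algebra_simps)
qed

lemma sadd: "\<sigma> (x + y) = \<sigma> x + \<sigma> y" using inv unfolding anti_linear_involution_def by blast
lemma sbr: "\<sigma> (br x y) = br (\<sigma> x) (\<sigma> y)" using inv unfolding anti_linear_involution_def by blast
lemma sdiff: "\<sigma> (x - y) = \<sigma> x - \<sigma> y"
  using sadd[of "x - y" y] by (simp add: eq_diff_eq)
lemma s0: "\<sigma> 0 = 0" using sdiff[of 0 0] by simp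

lemma qsub: "module.subspace sc q" using sub unfolding lie_subalgebra_def by blast
lemma qbr: "x \<in> q \<Longrightarrow> y \<in> q \<Longrightarrow> br x y \<in> q" using sub unfolding lie_subalgebra_def by blast
lemma modsc: "module sc"
proof -
  obtain B where "finite_dimensional_vector_space sc B" using lie unfolding complex_lie_algebra_def by blast
  thus ?thesis unfolding finite_dimensional_vector_space_def module_iff_vector_space by blast
qed

lemma q0: "0 \<in> q"
  using qsub modsc by (simp add: module.subspace_0)
lemma qdiff: "x \<in> q \<Longrightarrow> y \<in> q \<Longrightarrow> x - y \<in> q"
  using qsub modsc by (simp add: module.subspace_diff)

lemma Vq: "x \<in> q \<Longrightarrow> x \<in> V"
  unfolding q_plus_sq_def using q0 s0 by force
lemma Vsq: "x \<in> q \<Longrightarrow> \<sigma> x \<in> V"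
  unfolding q_plus_sq_def using q0 by force
lemma Vdiff: "x \<in> V \<Longrightarrow> y \<in> V \<Longrightarrow> x - y \<in> V"
proof -
  assume "x \<in> V" "y \<in> V"
  then obtain a b c d where "a \<in> q" "b \<in> q" "c \<in> q" "d \<in> q" "x = a + \<sigma> b" "y = c + \<sigma> d"
    unfolding q_plus_sq_def by auto
  hence "x - y = (a - c) + \<sigma> (b - d)" by (simp add: sdiff algebra_simps)
  thus ?thesis unfolding q_plus_sq_def using qdiff \<open>a \<in> q\<close> \<open>b \<in> q\<close> \<open>c \<in> q\<close> \<open>d \<in> q\<close> by blast
qed
lemma Vadd: "x \<in> V \<Longrightarrow> y \<in> V \<Longrightarrow> x + y \<in> V"
proof -
  assume x: "x \<in> V" and y: "y \<in> V"
  have "0 \<in> V" using Vq q0 by blast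
  hence "0 - y \<in> V" using y by (rule Vdiff)
  hence "x - (0 - y) \<in> V" using x Vdiff by blast
  thus ?thesis by simp
qed

lemma Vtrans: "a - b \<in> V \<Longrightarrow> b - c \<in> V \<Longrightarrow> a - c \<in> V"
proof -
  assume "a - b \<in> V" "b - c \<in> V"
  hence "(a - b) + (b - c) \<in> V" by (rule Vadd)
  thus ?thesis by simp
qed

lemma foldl_diff: "foldl br u ys - foldl br v ys = foldl br (u - v) ys"
  by (induction ys arbitrary: u v) (simp_all add: brl_diff)

lemma foldl_q: "u \<in> q \<Longrightarrow> set ys \<subseteq> q \<Longrightarrow> foldl br u ys \<in> q"
  by (induction ys arbitrary: u) (simp_all add: qbr)

lemma minimal: "set ws \<subseteq> q \<Longrightarrow> length ws < k \<Longrightarrow> iter_comm br Z ws \<in> V"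
proof (rule ccontr)
  assume a: "set ws \<subseteq> q" "length ws < k" "iter_comm br Z ws \<notin> V"
  hence "\<exists>zs. levi_sequence br \<sigma> q Z zs \<and> length zs = length ws"
    unfolding levi_sequence_def by blast
  hence "(LEAST n. \<exists>zs. levi_sequence br \<sigma> q Z zs \<and> length zs = n) \<le> length ws"
    by (rule Least_le)
  hence "k \<le> length ws" using ord unfolding levi_order_def by simp
  thus False using a by simp
qed

lemma swap: "set (p @ [a, b] @ s) \<subseteq> q \<Longrightarrow> length (p @ [a, b] @ s) = k \<Longrightarrow>
  iter_comm br Z (p @ [a, b] @ s) - iter_comm br Z (p @ [b, a] @ s) \<in> V"
proof -
  assume h: "set (p @ [a, b] @ s) \<subseteq> q" "length (p @ [a, b] @ s) = k"
  have "iter_comm br Z (p @ [a, b] @ s) - iter_comm br Z (p @ [b, a] @ s)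
     = foldl br (br (br (foldl br Z p) a) b - br (br (foldl br Z p) b) a) s"
    unfolding iter_comm_def by (simp add: foldl_diff)
  also have "\<dots> = iter_comm br Z (p @ [br a b] @ s)"
    unfolding iter_comm_def by (simp add: jac2)
  also have "\<dots> \<in> V" using h by (intro minimal) (auto simp: qbr)
  finally show ?thesis .
qed

lemma move: "set (p @ [a] @ m @ s) \<subseteq> q \<Longrightarrow> length (p @ [a] @ m @ s) = k \<Longrightarrow>
  iter_comm br Z (p @ [a] @ m @ s) - iter_comm br Z (p @ m @ [a] @ s) \<in> V"
proof (induction m arbitrary: p)
  case Nil
  then show ?case using q0 Vq by simp
next
  case (Cons y m)
  have 1: "iter_comm br Z (p @ a # y # m @ s) - iter_comm br Z (p @ y # a # m @ s) \<in> V"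
    using Cons.prems swap[of p a y "m @ s"] by simp
  have 2: "iter_comm br Z (p @ y # a # m @ s) - iter_comm br Z (p @ y # m @ a # s) \<in> V"
    using Cons.prems Cons.IH[of "p @ [y]"] by simp
  show ?case using Vtrans[OF 1 2] by simp
qed

lemma perm: "mset xs = mset ys \<Longrightarrow> set xs \<subseteq> q \<Longrightarrow> length xs + length ts = k \<Longrightarrow> set ts \<subseteq> q \<Longrightarrow>
   iter_comm br Z (xs @ ts) - iter_comm br Z (ys @ ts) \<in> V"
proof (induction ys arbitrary: xs ts rule: rev_induct)
  case Nil
  then show ?case using q0 Vq by simp
next
  case (snoc a ys)
  have "a \<in> set xs" using snoc.prems(1) by (metis mset_eq_setD in_set_conv_decomp)
  then obtain x1 x2 where xs: "xs = x1 @ [a] @ x2" by (metis append_Cons append_Nil in_set_conv_decomp)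
  have 1: "iter_comm br Z (xs @ ts) - iter_comm br Z (x1 @ x2 @ a # ts) \<in> V"
    using snoc.prems xs move[of x1 a x2 ts] by simp
  have ms: "mset (x1 @ x2) = mset ys" using snoc.prems(1) xs by simp
  have 2: "iter_comm br Z (x1 @ x2 @ a # ts) - iter_comm br Z (ys @ a # ts) \<in> V"
    using snoc.prems xs snoc.IH[OF ms, of "a # ts"] by simp
  show ?case using Vtrans[OF 1 2] xs by simp
qed

end

theorem lemma3p8:
  fixes sc :: "complex \<Rightarrow> 'g::ab_group_add \<Rightarrow> 'g"
    and br :: "'g \<Rightarrow> 'g \<Rightarrow> 'g"
    and \<sigma> :: "'g \<Rightarrow> 'g"
    and q :: "'g set"
    and Z :: 'g
    and zs :: "'g list"
    and k :: nat
  assumes "complex_lie_algebra sc br"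
    and "anti_linear_involution sc br \<sigma>"
    and "lie_subalgebra sc br q"
    and "Z \<in> \<sigma> ` q - q"
    and "finite_levi_order br \<sigma> q Z"
    and "levi_order br \<sigma> q Z = k"
    and "levi_sequence br \<sigma> q Z zs"
    and "length zs = k"
  shows "(\<forall>i<k. zs ! i \<in> q - \<sigma> ` q)
    \<and> (k > 1 \<longrightarrow> (\<forall>i<k. br Z (zs ! i) \<in> q_plus_sq \<sigma> q - q))
    \<and> (\<forall>p. p permutes {..<k} \<longrightarrow> levi_sequence br \<sigma> q Z (map (\<lambda>i. zs ! p i) [0..<k]))"
proof -
  interpret LS sc br \<sigma> q Z k using assms by unfold_locales
  have zq: "set zs \<subseteq> q" and zV: "iter_comm br Z zs \<notin> V"
    using assms(7) unfolding levi_sequence_def by auto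
  have not_in: False if "iter_comm br Z ws - iter_comm br Z zs \<in> V" "iter_comm br Z ws \<in> V" for ws
  proof -
    have "iter_comm br Z ws - (iter_comm br Z ws - iter_comm br Z zs) \<in> V"
      using that Vdiff by blast
    thus False using zV by simp
  qed
  have dec: "zs = take i zs @ [zs ! i] @ drop (Suc i) zs" if "i < k" for i
    using that assms(8) by (metis id_take_nth_drop append_Cons append_Nil)
  have P1: "zs ! i \<in> q - \<sigma> ` q" if i: "i < k" for i
  proof
    show "zs ! i \<in> q" using zq i assms(8) by auto
    show "zs ! i \<notin> \<sigma> ` q"
    proof
      assume "zs ! i \<in> \<sigma> ` q"
      then obtain c where c: "c \<in> q" "zs ! i = \<sigma> c" by auto
      let ?r = "take i zs @ drop (Suc i) zs"
      have rq: "set ?r \<subseteq> q" using zq by (auto dest: in_set_takeD in_set_dropD)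
      have "iter_comm br Z ?r \<in> V" using rq i assms(8) by (intro minimal) auto
      then obtain a b where ab: "a \<in> q" "b \<in> q" "iter_comm br Z ?r = a + \<sigma> b"
        unfolding q_plus_sq_def by auto
      have "iter_comm br Z (?r @ [zs ! i]) = br (a + \<sigma> b) (zs ! i)"
        using ab unfolding iter_comm_def by simp
      also have "\<dots> = br a (zs ! i) + \<sigma> (br b c)" by (simp add: brl sbr c)
      also have "\<dots> \<in> V" unfolding q_plus_sq_def using ab c qbr \<open>zs ! i \<in> q\<close> by blast
      finally have in1: "iter_comm br Z (?r @ [zs ! i]) \<in> V" .
      have "iter_comm br Z (take i zs @ [zs ! i] @ drop (Suc i) zs @ []) -
            iter_comm br Z (take i zs @ drop (Suc i) zs @ [zs ! i] @ []) \<in> V"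
        using zq assms(8) i by (intro move) (auto dest: in_set_takeD in_set_dropD simp: nth_mem)
      hence "iter_comm br Z (take i zs @ [zs ! i] @ drop (Suc i) zs) - iter_comm br Z (?r @ [zs ! i]) \<in> V"
        by (simp only: append_Nil2 append_Nil append_assoc)
      hence "iter_comm br Z zs - iter_comm br Z (?r @ [zs ! i]) \<in> V"
        by (simp only: dec[OF i, symmetric])
      hence "iter_comm br Z (?r @ [zs ! i]) - iter_comm br Z zs \<in> V"
        using Vdiff[OF Vq[OF q0]] by fastforce
      thus False using not_in in1 by blast
    qed
  qed
  have P2: "br Z (zs ! i) \<in> V - q" if k1: "k > 1" and i: "i < k" for i
  proof
    have ziq: "zs ! i \<in> q" using P1 i by blast
    show "br Z (zs ! i) \<in> V" using minimal[of "[zs ! i]"] k1 ziq unfolding iter_comm_def by simp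
    show "br Z (zs ! i) \<notin> q"
    proof
      assume bq: "br Z (zs ! i) \<in> q"
      let ?r = "take i zs @ drop (Suc i) zs"
      have rq: "set ?r \<subseteq> q" using zq by (auto dest: in_set_takeD in_set_dropD)
      have "iter_comm br Z ([zs ! i] @ ?r) = foldl br (br Z (zs ! i)) ?r"
        unfolding iter_comm_def by simp
      hence in1: "iter_comm br Z ([zs ! i] @ ?r) \<in> V" using foldl_q[OF bq rq] Vq by simp
      have "iter_comm br Z ([] @ [zs ! i] @ take i zs @ drop (Suc i) zs) -
            iter_comm br Z ([] @ take i zs @ [zs ! i] @ drop (Suc i) zs) \<in> V"
        using zq assms(8) i by (intro move) (auto dest: in_set_takeD in_set_dropD simp: nth_mem)
      hence "iter_comm br Z ([zs ! i] @ ?r) - iter_comm br Z (take i zs @ [zs ! i] @ drop (Suc i) zs) \<in> V"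
        by (simp only: append_Nil2 append_Nil)
      hence "iter_comm br Z ([zs ! i] @ ?r) - iter_comm br Z zs \<in> V"
        by (simp only: dec[OF i, symmetric])
      thus False using not_in in1 by blast
    qed
  qed
  have P3: "levi_sequence br \<sigma> q Z (map (\<lambda>i. zs ! p i) [0..<k])" if p: "p permutes {..<k}" for p
  proof -
    let ?ys = "map (\<lambda>i. zs ! p i) [0..<k]"
    have eq: "?ys = permute_list p zs" unfolding permute_list_def assms(8) by (rule refl)
    have p': "p permutes {..<length zs}" using p unfolding assms(8) .
    have ms: "mset ?ys = mset zs" unfolding eq by (rule mset_permute_list[OF p'])
    have "set ?ys = set zs" using ms by (rule mset_eq_setD)
    hence yq: "set ?ys \<subseteq> q" using zq by simp
    have ly: "length ?ys = k" by simp
    have "iter_comm br Z (?ys @ []) - iter_comm br Z (zs @ []) \<in> V"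
      by (rule perm[OF ms yq]) (simp_all add: ly)
    hence d: "iter_comm br Z ?ys - iter_comm br Z zs \<in> V" by (simp only: append_Nil2)
    have "iter_comm br Z ?ys \<notin> V" using not_in[OF d] by blast
    thus ?thesis using yq unfolding levi_sequence_def by blast
  qed
  show ?thesis
  proof (intro conjI allI impI)
    fix i assume "i < k" thus "zs ! i \<in> q - \<sigma> ` q" by (rule P1)
  next
    fix i assume "1 < k" "i < k" thus "br Z (zs ! i) \<in> q_plus_sq \<sigma> q - q" by (rule P2)
  next
    fix p assume "p permutes {..<k}" thus "levi_sequence br \<sigma> q Z (map (\<lambda>i. zs ! p i) [0..<k])" by (rule P3)
  qed
qed

end
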